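(* Let $A=\mathrm{Diag}(a_1,a_2,a_3,a_4)$, $B=\mathrm{Diag}(b_1,b_2,b_3,b_4)$, $C=\mathrm{Diag}(c_1,c_2,c_3,c_4)$ be traceless real diagonal matrices. Then for the $G_2$-structure $(G_{A,B,C},\varphi)$, with $\psi=*\varphi$, $$\Delta\varphi=\big((a_1+a_2)^2+(b_1+b_2)^2+(c_1+c_2)^2\big)\omega_7\wedge e^7+\big((a_1+a_3)^2+(b_1+b_3)^2+(c_1+c_3)^2\big)\omega_1\wedge e^1+\big((a_1+a_4)^2+(b_1+b_4)^2+(c_1+c_4)^2\big)\omega_2\wedge e^2,$$ $$\Delta\psi=\big((a_1+a_2)^2+(b_1+b_2)^2+(c_1+c_2)^2\big)\omega_7\wedge e^{12}+\big((a_1+a_3)^2+(b_1+b_3)^2+(c_1+c_3)^2\big)\omega_1\wedge e^{27}-\big((a_1+a_4)^2+(b_1+b_4)^2+(c_1+c_4)^2\big)\omega_2\wedge e^{17}.$$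
   Context: For commuting $A,B,C\in\mathfrak{sl}_4(\mathbb R)$, $\mathfrak g_{A,B,C}$ is the Lie algebra with basis $\{e_1,\dots,e_7\}$ in which $\langle e_7,e_1,e_2\rangle$ is an abelian subalgebra, $\mathfrak n=\langle e_3,\dots,e_6\rangle$ is an abelian ideal, and in the basis $\{e_3,\dots,e_6\}$, $\mathrm{ad}\,e_7|_{\mathfrak n}=A$, $\mathrm{ad}\,e_1|_{\mathfrak n}=B$, $\mathrm{ad}\,e_2|_{\mathfrak n}=C$; $G_{A,B,C}$ is the simply connected Lie group with this Lie algebra, with left-invariant positive 3-form $\varphi=e^{127}+e^{347}+e^{567}+e^{135}-e^{146}-e^{236}-e^{245}$ ($\{e^i\}$ dual basis, $e^{ij}=e^i\wedge e^j$). The induced metric makes $\{e_1,\dots,e_7\}$ oriented orthonormal; $*$ is its Hodge star and $\Delta=dd^*+d^*d$ the Hodge Laplacian on left-invariant forms. Also $\omega_7=e^{34}+e^{56}$, $\omega_1=e^{35}-e^{46}$, $\omega_2=-e^{36}-e^{45}$. *)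

theory Defs
  imports Complex_Main
begin

text \<open>Left-invariant forms on a 7-dimensional Lie group with basis e_1..e_7.
A (mixed-degree) form is a coefficient function on index sets: the form
alpha = sum over I of alpha(I) e^I, where for I = {i_1 < ... < i_k} we write
e^I = e^{i_1} wedge ... wedge e^{i_k}.  Only subsets of {1..7} are relevant;
all operations below vanish outside of them.\<close>

type_synonym form = "nat set \<Rightarrow> real"

definition idx :: "nat set" where "idx = {1..7}"

definition ef :: "nat \<Rightarrow> form" where
  "ef i = (\<lambda>J. if J = {i} then 1 else 0)"

text \<open>Sign of e^I wedge e^J = msgn I J * e^(I union J) for disjoint I, J.\<close>
definition msgn :: "nat set \<Rightarrow> nat set \<Rightarrow> real" where
  "msgn I J = (-1) ^ card {(i, j). i \<in> I \<and> j \<in> J \<and> j < i}"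

definition wedge :: "form \<Rightarrow> form \<Rightarrow> form" (infixr "\<and>\<^sub>f" 70) where
  "wedge \<alpha> \<beta> = (\<lambda>K. if K \<subseteq> idx then (\<Sum>I\<in>Pow K. \<alpha> I * \<beta> (K - I) * msgn I (K - I)) else 0)"

definition fadd :: "form \<Rightarrow> form \<Rightarrow> form" (infixl "+\<^sub>f" 65) where
  "fadd \<alpha> \<beta> = (\<lambda>K. \<alpha> K + \<beta> K)"

definition fsub :: "form \<Rightarrow> form \<Rightarrow> form" (infixl "-\<^sub>f" 65) where
  "fsub \<alpha> \<beta> = (\<lambda>K. \<alpha> K - \<beta> K)"

definition fscale :: "real \<Rightarrow> form \<Rightarrow> form" (infixr "*\<^sub>f" 75) where
  "fscale c \<alpha> = (\<lambda>K. c * \<alpha> K)"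

text \<open>Number of inversions of a list (its parity is the sign of the sorting permutation).\<close>
definition inversions :: "nat list \<Rightarrow> nat" where
  "inversions xs = card {(i, j). i < j \<and> j < length xs \<and> xs ! j < xs ! i}"

text \<open>Value of a form on the tuple of basis vectors (e_{x_1}, ..., e_{x_k}).\<close>
definition ev :: "form \<Rightarrow> nat list \<Rightarrow> real" where
  "ev \<alpha> xs = (if distinct xs then (-1) ^ inversions xs * \<alpha> (set xs) else 0)"

text \<open>A Lie bracket given by structure constants: br i j m is the e_m-coefficient
of [e_i, e_j].  The exterior derivative of a left-invariant form is
d alpha(X_0,...,X_k) = sum_{i<j} (-1)^(i+j) alpha([X_i,X_j], X_0, .., X_i^, .., X_j^, .., X_k).\<close>
definition dext :: "(nat \<Rightarrow> nat \<Rightarrow> nat \<Rightarrow> real) \<Rightarrow> form \<Rightarrow> form" where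
  "dext br \<alpha> = (\<lambda>K. if K \<subseteq> idx then
      (let ks = sorted_list_of_set K; p = length ks in
        \<Sum>i<p. \<Sum>j<p. if i < j then
          (-1) ^ (i + j) * (\<Sum>m\<in>idx. br (ks ! i) (ks ! j) m *
              ev \<alpha> (m # [ks ! l. l \<leftarrow> [0..<p], l \<noteq> i \<and> l \<noteq> j]))
        else 0)
     else 0)"

text \<open>Hodge star of the metric making e_1..e_7 an oriented orthonormal basis:
*e^I = msgn I I^c e^(I^c), so that e^I wedge *e^I = e^{1234567}.\<close>
definition hstar :: "form \<Rightarrow> form" where
  "hstar \<alpha> = (\<lambda>J. if J \<subseteq> idx then \<alpha> (idx - J) * msgn (idx - J) J else 0)"

text \<open>Codifferential on k-forms in dimension 7: d^* = (-1)^(7(k+1)+1) * d * = (-1)^k * d *.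
Its value on an index set J of size k-1 only involves the degree-k part of alpha.\<close>
definition codiff :: "(nat \<Rightarrow> nat \<Rightarrow> nat \<Rightarrow> real) \<Rightarrow> form \<Rightarrow> form" where
  "codiff br \<alpha> = (\<lambda>J. (-1) ^ (card J + 1) * hstar (dext br (hstar \<alpha>)) J)"

definition hodge_lap :: "(nat \<Rightarrow> nat \<Rightarrow> nat \<Rightarrow> real) \<Rightarrow> form \<Rightarrow> form" where
  "hodge_lap br \<alpha> = dext br (codiff br \<alpha>) +\<^sub>f codiff br (dext br \<alpha>)"

text \<open>Structure constants of g_{A,B,C}: matrices are functions M r s (row r, column s,
indices 1..4) w.r.t. the basis e_3..e_6 of n; ad e_7|n = A, ad e_1|n = B, ad e_2|n = C;
<e_7,e_1,e_2> abelian, n abelian.\<close>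
definition admat :: "(nat \<Rightarrow> nat \<Rightarrow> real) \<Rightarrow> (nat \<Rightarrow> nat \<Rightarrow> real) \<Rightarrow> (nat \<Rightarrow> nat \<Rightarrow> real)
    \<Rightarrow> nat \<Rightarrow> nat \<Rightarrow> nat \<Rightarrow> real" where
  "admat A B C x = (if x = 7 then A else if x = 1 then B else if x = 2 then C else (\<lambda>_ _. 0))"

definition gbr :: "(nat \<Rightarrow> nat \<Rightarrow> real) \<Rightarrow> (nat \<Rightarrow> nat \<Rightarrow> real) \<Rightarrow> (nat \<Rightarrow> nat \<Rightarrow> real)
    \<Rightarrow> nat \<Rightarrow> nat \<Rightarrow> nat \<Rightarrow> real" where
  "gbr A B C i j m =
     (if m \<in> {3..6} then
        (if i \<in> {7,1,2} \<and> j \<in> {3..6} then admat A B C i (m - 2) (j - 2)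
         else if j \<in> {7,1,2} \<and> i \<in> {3..6} then - admat A B C j (m - 2) (i - 2)
         else 0)
      else 0)"

definition diagm :: "(nat \<Rightarrow> real) \<Rightarrow> nat \<Rightarrow> nat \<Rightarrow> real" where
  "diagm a = (\<lambda>r s. if r = s then a r else 0)"

definition phi :: form where
  "phi = (ef 1 \<and>\<^sub>f ef 2 \<and>\<^sub>f ef 7) +\<^sub>f (ef 3 \<and>\<^sub>f ef 4 \<and>\<^sub>f ef 7) +\<^sub>f (ef 5 \<and>\<^sub>f ef 6 \<and>\<^sub>f ef 7)
     +\<^sub>f (ef 1 \<and>\<^sub>f ef 3 \<and>\<^sub>f ef 5) -\<^sub>f (ef 1 \<and>\<^sub>f ef 4 \<and>\<^sub>f ef 6) -\<^sub>f (ef 2 \<and>\<^sub>f ef 3 \<and>\<^sub>f ef 6)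
     -\<^sub>f (ef 2 \<and>\<^sub>f ef 4 \<and>\<^sub>f ef 5)"

definition omega7 :: form where "omega7 = (ef 3 \<and>\<^sub>f ef 4) +\<^sub>f (ef 5 \<and>\<^sub>f ef 6)"
definition omega1 :: form where "omega1 = (ef 3 \<and>\<^sub>f ef 5) -\<^sub>f (ef 4 \<and>\<^sub>f ef 6)"
definition omega2 :: form where "omega2 = ((-1) *\<^sub>f (ef 3 \<and>\<^sub>f ef 6)) -\<^sub>f (ef 4 \<and>\<^sub>f ef 5)"

end

theory Submission
  imports Defs
begin


definition bf :: "nat set \<Rightarrow> form" where "bf S = (\<lambda>K. if K = S then 1 else 0)"
definition mv :: "nat set \<Rightarrow> bool list" where "mv K = map (\<lambda>i. i \<in> K) [1,2,3,4,5,6,7]"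
definition fl :: "(real \<times> nat set) list \<Rightarrow> form" where
  "fl L = (\<lambda>K. \<Sum>p\<leftarrow>L. fst p * bf (snd p) K)"

lemma idx_expl: "idx = {1,2,3,4,5,6,7}" by (auto simp: idx_def)

lemma mv_eq: assumes "K \<subseteq> idx" "S \<subseteq> idx" shows "(K = S) = (mv K = mv S)"
proof
  assume "mv K = mv S"
  then have "\<forall>i\<in>idx. (i \<in> K) = (i \<in> S)" unfolding mv_def map_eq_conv idx_expl by simp
  then show "K = S" using assms by blast
qed simp

lemma bf_eval: "S \<subseteq> idx \<Longrightarrow> bf S K = (if K \<subseteq> idx \<and> mv K = mv S then 1 else 0)"
  unfolding bf_def using mv_eq by auto

lemma form_eq:
  assumes "\<And>K. \<not> K \<subseteq> idx \<Longrightarrow> F K = 0" "\<And>K. \<not> K \<subseteq> idx \<Longrightarrow> G K = 0"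
    "\<forall>ks\<in>set (subseqs [1,2,3,4,5,6,7]). F (set ks) = G (set ks)"
  shows "F = G"
proof
  fix K
  show "F K = G K"
  proof (cases "K \<subseteq> idx")
    case True
    then have "K \<subseteq> set [1,2,3,4,5,6,7]" by (simp add: idx_expl)
    then have "K \<in> set ` set (subseqs [1,2,3,4,5,6,7])" by (rule subset_subseqs)
    then show ?thesis using assms(3) by auto
  qed (simp add: assms)
qed

lemma inversions_list: "inversions xs =
  length (filter (\<lambda>p. fst p < snd p \<and> xs ! snd p < xs ! fst p) (List.product [0..<length xs] [0..<length xs]))"
proof -
  let ?L = "filter (\<lambda>p. fst p < snd p \<and> xs ! snd p < xs ! fst p) (List.product [0..<length xs] [0..<length xs])"
  have eq: "{(i, j). i < j \<and> j < length xs \<and> xs ! j < xs ! i} = set ?L"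
  proof (rule set_eqI)
    fix p :: "nat \<times> nat"
    show "p \<in> {(i, j). i < j \<and> j < length xs \<and> xs ! j < xs ! i} \<longleftrightarrow> p \<in> set ?L"
      by (cases p) (auto simp: set_product)
  qed
  have d: "distinct ?L" by (simp add: distinct_product)
  show ?thesis unfolding inversions_def by (simp only: eq distinct_card[OF d])
qed

lemma msgn_sum: assumes "finite I" "finite J"
  shows "msgn I J = (-1) ^ (\<Sum>x\<in>I. \<Sum>y\<in>J. if y < x then 1 else 0)"
proof -
  have "card {(i, j). i \<in> I \<and> j \<in> J \<and> j < i} = card (SIGMA i:I. {j\<in>J. j < i})"
    by (rule arg_cong[where f=card]) auto
  also have "\<dots> = (\<Sum>i\<in>I. card {j\<in>J. j < i})"
    by (rule card_SigmaI) (use assms in auto)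
  also have "\<dots> = (\<Sum>x\<in>I. \<Sum>y\<in>J. if y < x then 1 else 0)"
  proof (rule sum.cong)
    fix x show "card {j \<in> J. j < x} = (\<Sum>y\<in>J. if y < x then 1 else 0)"
      unfolding card_eq_sum by (rule sum.inter_filter[OF assms(2)])
  qed (rule refl)
  finally have eq: "card {(i, j). i \<in> I \<and> j \<in> J \<and> j < i} = (\<Sum>x\<in>I. \<Sum>y\<in>J. if y < x then 1 else 0)" .
  show ?thesis by (simp only: msgn_def eq)
qed

definition dd :: "(nat \<Rightarrow> real) \<Rightarrow> (nat \<Rightarrow> real) \<Rightarrow> (nat \<Rightarrow> real) \<Rightarrow> nat \<Rightarrow> nat \<Rightarrow> real" where
  "dd a b c x r = (if x = 7 then a r else if x = 1 then b r else if x = 2 then c r else 0)"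

definition gsum :: "(nat \<Rightarrow> real) \<Rightarrow> (nat \<Rightarrow> real) \<Rightarrow> (nat \<Rightarrow> real) \<Rightarrow> nat \<Rightarrow> nat \<Rightarrow> (nat \<Rightarrow> real) \<Rightarrow> real" where
  "gsum a b c i j f = (if i \<in> {7,1,2} \<and> j \<in> {3..6} then dd a b c i (j - 2) * f j
      else if j \<in> {7,1,2} \<and> i \<in> {3..6} then - dd a b c j (i - 2) * f i else 0)"

lemma gsum_cong[cong]: "i = i' \<Longrightarrow> j = j' \<Longrightarrow> gsum a b c i j f = gsum a b c i' j' f" by simp


lemma admat_dd: "x \<in> {7,1,2} \<Longrightarrow> admat (diagm a) (diagm b) (diagm c) x r s = (if r = s then dd a b c x r else 0)"
  unfolding admat_def diagm_def dd_def by auto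

lemma gbr_1: assumes "i \<in> {7,1,2}" "j \<in> {3..6}"
  shows "gbr (diagm a) (diagm b) (diagm c) i j m = (if m = j then dd a b c i (j - 2) else 0)"
proof -
  have "j \<notin> {7,1,2}" "3 \<le> j" using assms(2) by auto
  then show ?thesis using assms unfolding gbr_def by (auto simp: admat_dd)
qed

lemma gbr_0: assumes "\<not> (i \<in> {7,1,2} \<and> j \<in> {3..6})" "\<not> (j \<in> {7,1,2} \<and> i \<in> {3..6})"
  shows "gbr (diagm a) (diagm b) (diagm c) i j m = 0"
  unfolding gbr_def by (simp only: assms if_False if_cancel)
lemma gbr_2: assumes "j \<in> {7,1,2}" "i \<in> {3..6}"
  shows "gbr (diagm a) (diagm b) (diagm c) i j m = (if m = i then - dd a b c j (i - 2) else 0)"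
proof -
  have "i \<notin> {7,1,2}" "3 \<le> i" using assms(2) by auto
  then show ?thesis using assms unfolding gbr_def by (auto simp: admat_dd)
qed


lemma gbr_sum: "(\<Sum>m\<in>idx. gbr (diagm a) (diagm b) (diagm c) i j m * f m) = gsum a b c i j f"
proof (cases "i \<in> {7,1,2} \<and> j \<in> {3..6}")
  case True
  then have "(\<Sum>m\<in>idx. gbr (diagm a) (diagm b) (diagm c) i j m * f m) =
        (\<Sum>m\<in>idx. if m = j then dd a b c i (j - 2) * f j else 0)"
    by (intro sum.cong) (simp_all add: gbr_1)
  also have "\<dots> = dd a b c i (j - 2) * f j" using True by (simp add: idx_def)
  finally show ?thesis using True by (simp add: gsum_def)
next
  case F1: False
  show ?thesis
  proof (cases "j \<in> {7,1,2} \<and> i \<in> {3..6}")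
    case True
    then have "(\<Sum>m\<in>idx. gbr (diagm a) (diagm b) (diagm c) i j m * f m) =
          (\<Sum>m\<in>idx. if m = i then - dd a b c j (i - 2) * f i else 0)"
      by (intro sum.cong) (simp_all add: gbr_2)
    also have "\<dots> = - dd a b c j (i - 2) * f i" using True by (simp add: idx_def)
    finally show ?thesis using True F1 by (simp add: gsum_def)
  next
    case False
    have z: "\<And>m. gbr (diagm a) (diagm b) (diagm c) i j m = 0" by (rule gbr_0[OF F1 False])
    show ?thesis unfolding gsum_def by (simp only: z mult_zero_left sum.neutral_const if_False F1 False)
  qed
qed


definition dl :: "(nat \<Rightarrow> real) \<Rightarrow> (nat \<Rightarrow> real) \<Rightarrow> (nat \<Rightarrow> real) \<Rightarrow> form \<Rightarrow> nat list \<Rightarrow> real" where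
  "dl a b c \<alpha> ks = (\<Sum>i\<leftarrow>[0..<length ks]. \<Sum>j\<leftarrow>[0..<length ks]. if i < j then
          (-1) ^ (i + j) * gsum a b c (ks ! i) (ks ! j)
              (\<lambda>m. ev \<alpha> (m # [ks ! l. l \<leftarrow> [0..<length ks], l \<noteq> i \<and> l \<noteq> j]))
        else 0)"

lemma dext_eval: "dext (gbr (diagm a) (diagm b) (diagm c)) \<alpha> K =
   (if K \<subseteq> idx then dl a b c \<alpha> (sorted_list_of_set K) else 0)"
  unfolding dext_def dl_def Let_def gbr_sum
  by (simp add: interv_sum_list_conv_sum_set_nat atLeast0LessThan)

lemma hstar_out: "\<not> K \<subseteq> idx \<Longrightarrow> hstar \<alpha> K = 0" by (simp add: hstar_def)
lemma dext_out: "\<not> K \<subseteq> idx \<Longrightarrow> dext br \<alpha> K = 0" by (simp add: dext_def)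
lemma codiff_out: "\<not> K \<subseteq> idx \<Longrightarrow> codiff br \<alpha> K = 0" by (simp add: codiff_def hstar_def)
lemma fl_out: "\<forall>p\<in>set L. snd p \<subseteq> idx \<Longrightarrow> \<not> K \<subseteq> idx \<Longrightarrow> fl L K = 0"
  unfolding fl_def by (induction L) (auto simp: bf_def)


lemma bf_out: "S \<subseteq> idx \<Longrightarrow> \<not> K \<subseteq> idx \<Longrightarrow> bf S K = 0" by (auto simp: bf_def)

lemma ef_bf: "ef i = bf {i}" by (simp add: ef_def bf_def)

lemma wedge_bf: assumes "S \<subseteq> idx" "T \<subseteq> idx"
  shows "bf S \<and>\<^sub>f bf T = (if S \<inter> T = {} then msgn S T else 0) *\<^sub>f bf (S \<union> T)"
proof (rule ext)
  fix K
  show "(bf S \<and>\<^sub>f bf T) K = ((if S \<inter> T = {} then msgn S T else 0) *\<^sub>f bf (S \<union> T)) K"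
  proof (cases "K \<subseteq> idx")
    case False
    then have "K \<noteq> S \<union> T" using assms by auto
    with False show ?thesis by (simp add: wedge_def fscale_def bf_def)
  next
    case True
    have fin: "finite (Pow K)" using finite_subset[OF True] by (simp add: idx_def)
    have "(\<Sum>I\<in>Pow K. bf S I * bf T (K - I) * msgn I (K - I)) =
          (\<Sum>I\<in>Pow K. if I = S then bf T (K - S) * msgn S (K - S) else 0)"
      by (rule sum.cong) (auto simp: bf_def)
    also have "\<dots> = (if S \<subseteq> K then bf T (K - S) * msgn S (K - S) else 0)"
      using fin by (simp add: sum.delta)
    also have "\<dots> = ((if S \<inter> T = {} then msgn S T else 0) *\<^sub>f bf (S \<union> T)) K"
    proof (cases "S \<inter> T = {} \<and> K = S \<union> T")
      case True
      then have "K - S = T" by auto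
      with True show ?thesis unfolding fscale_def bf_def by auto
    next
      case False
      then have "\<not> (S \<subseteq> K \<and> K - S = T)" by auto
      with False show ?thesis unfolding fscale_def bf_def by auto
    qed
    finally show ?thesis using True by (simp add: wedge_def)
  qed
qed

lemma wedge_fadd_left: "(\<alpha> +\<^sub>f \<beta>) \<and>\<^sub>f \<gamma> = (\<alpha> \<and>\<^sub>f \<gamma>) +\<^sub>f (\<beta> \<and>\<^sub>f \<gamma>)"
  unfolding wedge_def fadd_def by (auto simp: sum.distrib algebra_simps)
lemma wedge_fsub_left: "(\<alpha> -\<^sub>f \<beta>) \<and>\<^sub>f \<gamma> = (\<alpha> \<and>\<^sub>f \<gamma>) -\<^sub>f (\<beta> \<and>\<^sub>f \<gamma>)"
  unfolding wedge_def fsub_def by (auto simp: sum_subtractf algebra_simps)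
lemma wedge_fscale_left: "(x *\<^sub>f \<alpha>) \<and>\<^sub>f \<gamma> = x *\<^sub>f (\<alpha> \<and>\<^sub>f \<gamma>)"
  unfolding wedge_def fscale_def by (auto simp: sum_distrib_left algebra_simps)
lemma wedge_fscale_right: "\<alpha> \<and>\<^sub>f (x *\<^sub>f \<gamma>) = x *\<^sub>f (\<alpha> \<and>\<^sub>f \<gamma>)"
  unfolding wedge_def fscale_def by (auto simp: sum_distrib_left algebra_simps)

definition PHI :: "(nat \<Rightarrow> real) \<Rightarrow> (nat \<Rightarrow> real) \<Rightarrow> (nat \<Rightarrow> real) \<Rightarrow> (real \<times> nat set) list" where
  "PHI a b c = [((1), {1,2,7}),
   ((1), {1,3,5}),
   ((- 1), {1,4,6}),
   ((- 1), {2,3,6}),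
   ((- 1), {2,4,5}),
   ((1), {3,4,7}),
   ((1), {5,6,7})]"

definition PSI :: "(nat \<Rightarrow> real) \<Rightarrow> (nat \<Rightarrow> real) \<Rightarrow> (nat \<Rightarrow> real) \<Rightarrow> (real \<times> nat set) list" where
  "PSI a b c = [((1), {1,2,3,4}),
   ((1), {1,2,5,6}),
   ((1), {1,3,6,7}),
   ((1), {1,4,5,7}),
   ((1), {2,3,5,7}),
   ((- 1), {2,4,6,7}),
   ((1), {3,4,5,6})]"

definition D1 :: "(nat \<Rightarrow> real) \<Rightarrow> (nat \<Rightarrow> real) \<Rightarrow> (nat \<Rightarrow> real) \<Rightarrow> (real \<times> nat set) list" where
  "D1 a b c = [((c 1 + c 3), {1,2,3,5}),
   ((b 1 + b 4), {1,2,3,6}),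
   ((b 2 + b 3), {1,2,4,5}),
   ((- c 2 - c 4), {1,2,4,6}),
   ((- b 1 - b 2), {1,3,4,7}),
   ((a 1 + a 3), {1,3,5,7}),
   ((- a 2 - a 4), {1,4,6,7}),
   ((- b 3 - b 4), {1,5,6,7}),
   ((- c 1 - c 2), {2,3,4,7}),
   ((- a 1 - a 4), {2,3,6,7}),
   ((- a 2 - a 3), {2,4,5,7}),
   ((- c 3 - c 4), {2,5,6,7})]"

definition D2 :: "(nat \<Rightarrow> real) \<Rightarrow> (nat \<Rightarrow> real) \<Rightarrow> (nat \<Rightarrow> real) \<Rightarrow> (real \<times> nat set) list" where
  "D2 a b c = [((- a 1 - a 2), {1,2,3,4,7}),
   ((- b 1 - b 3), {1,2,3,5,7}),
   ((c 1 + c 4), {1,2,3,6,7}),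
   ((c 2 + c 3), {1,2,4,5,7}),
   ((b 2 + b 4), {1,2,4,6,7}),
   ((- a 3 - a 4), {1,2,5,6,7}),
   ((- b 1 - b 2 - b 3 - b 4), {1,3,4,5,6}),
   ((- c 1 - c 2 - c 3 - c 4), {2,3,4,5,6}),
   ((- a 1 - a 2 - a 3 - a 4), {3,4,5,6,7})]"

definition C1 :: "(nat \<Rightarrow> real) \<Rightarrow> (nat \<Rightarrow> real) \<Rightarrow> (nat \<Rightarrow> real) \<Rightarrow> (real \<times> nat set) list" where
  "C1 a b c = [((a 1 + a 2 + a 3 + a 4), {1,2}),
   ((- c 1 - c 2 - c 3 - c 4), {1,7}),
   ((b 1 + b 2 + b 3 + b 4), {2,7}),
   ((a 3 + a 4), {3,4}),
   ((b 2 + b 4), {3,5}),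
   ((- c 2 - c 3), {3,6}),
   ((- c 1 - c 4), {4,5}),
   ((- b 1 - b 3), {4,6}),
   ((a 1 + a 2), {5,6})]"

definition C2 :: "(nat \<Rightarrow> real) \<Rightarrow> (nat \<Rightarrow> real) \<Rightarrow> (nat \<Rightarrow> real) \<Rightarrow> (real \<times> nat set) list" where
  "C2 a b c = [((- c 3 - c 4), {1,3,4}),
   ((- a 2 - a 3), {1,3,6}),
   ((- a 1 - a 4), {1,4,5}),
   ((- c 1 - c 2), {1,5,6}),
   ((b 3 + b 4), {2,3,4}),
   ((- a 2 - a 4), {2,3,5}),
   ((a 1 + a 3), {2,4,6}),
   ((b 1 + b 2), {2,5,6}),
   ((c 2 + c 4), {3,5,7}),
   ((b 2 + b 3), {3,6,7}),
   ((b 1 + b 4), {4,5,7}),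
   ((- c 1 - c 3), {4,6,7})]"

definition DC1 :: "(nat \<Rightarrow> real) \<Rightarrow> (nat \<Rightarrow> real) \<Rightarrow> (nat \<Rightarrow> real) \<Rightarrow> (real \<times> nat set) list" where
  "DC1 a b c = [((- a 3 * b 1 - a 3 * b 2 - a 4 * b 1 - a 4 * b 2), {1,3,4}),
   ((- b 1 * b 2 - b 1 * b 4 - b 2 * b 3 - b 3 * b 4), {1,3,5}),
   ((b 1 * c 2 + b 1 * c 3 + b 4 * c 2 + b 4 * c 3), {1,3,6}),
   ((b 2 * c 1 + b 2 * c 4 + b 3 * c 1 + b 3 * c 4), {1,4,5}),
   ((b 1 * b 2 + b 1 * b 4 + b 2 * b 3 + b 3 * b 4), {1,4,6}),
   ((- a 1 * b 3 - a 1 * b 4 - a 2 * b 3 - a 2 * b 4), {1,5,6}),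
   ((- a 3 * c 1 - a 3 * c 2 - a 4 * c 1 - a 4 * c 2), {2,3,4}),
   ((- b 2 * c 1 - b 2 * c 3 - b 4 * c 1 - b 4 * c 3), {2,3,5}),
   ((c 1 * c 2 + c 1 * c 3 + c 2 * c 4 + c 3 * c 4), {2,3,6}),
   ((c 1 * c 2 + c 1 * c 3 + c 2 * c 4 + c 3 * c 4), {2,4,5}),
   ((b 1 * c 2 + b 1 * c 4 + b 3 * c 2 + b 3 * c 4), {2,4,6}),
   ((- a 1 * c 3 - a 1 * c 4 - a 2 * c 3 - a 2 * c 4), {2,5,6}),
   ((- a 1 * a 3 - a 1 * a 4 - a 2 * a 3 - a 2 * a 4), {3,4,7}),
   ((- a 1 * b 2 - a 1 * b 4 - a 3 * b 2 - a 3 * b 4), {3,5,7}),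
   ((a 1 * c 2 + a 1 * c 3 + a 4 * c 2 + a 4 * c 3), {3,6,7}),
   ((a 2 * c 1 + a 2 * c 4 + a 3 * c 1 + a 3 * c 4), {4,5,7}),
   ((a 2 * b 1 + a 2 * b 3 + a 4 * b 1 + a 4 * b 3), {4,6,7}),
   ((- a 1 * a 3 - a 1 * a 4 - a 2 * a 3 - a 2 * a 4), {5,6,7})]"

definition DC2 :: "(nat \<Rightarrow> real) \<Rightarrow> (nat \<Rightarrow> real) \<Rightarrow> (nat \<Rightarrow> real) \<Rightarrow> (real \<times> nat set) list" where
  "DC2 a b c = [((- b 1 * b 3 - b 1 * b 4 - b 2 * b 3 - b 2 * b 4 - c 1 * c 3 - c 1 * c 4 - c 2 * c 3 - c 2 * c 4), {1,2,3,4}),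
   ((a 2 * b 1 + a 2 * b 3 + a 4 * b 1 + a 4 * b 3), {1,2,3,5}),
   ((- a 2 * c 1 - a 2 * c 4 - a 3 * c 1 - a 3 * c 4), {1,2,3,6}),
   ((- a 1 * c 2 - a 1 * c 3 - a 4 * c 2 - a 4 * c 3), {1,2,4,5}),
   ((- a 1 * b 2 - a 1 * b 4 - a 3 * b 2 - a 3 * b 4), {1,2,4,6}),
   ((- b 1 * b 3 - b 1 * b 4 - b 2 * b 3 - b 2 * b 4 - c 1 * c 3 - c 1 * c 4 - c 2 * c 3 - c 2 * c 4), {1,2,5,6}),
   ((- a 1 * c 3 - a 1 * c 4 - a 2 * c 3 - a 2 * c 4), {1,3,4,7}),
   ((- b 1 * c 2 - b 1 * c 4 - b 3 * c 2 - b 3 * c 4), {1,3,5,7}),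
   ((- a 1 * a 2 - a 1 * a 3 - a 2 * a 4 - a 3 * a 4 - b 1 * b 2 - b 1 * b 3 - b 2 * b 4 - b 3 * b 4), {1,3,6,7}),
   ((- a 1 * a 2 - a 1 * a 3 - a 2 * a 4 - a 3 * a 4 - b 1 * b 2 - b 1 * b 3 - b 2 * b 4 - b 3 * b 4), {1,4,5,7}),
   ((b 2 * c 1 + b 2 * c 3 + b 4 * c 1 + b 4 * c 3), {1,4,6,7}),
   ((- a 3 * c 1 - a 3 * c 2 - a 4 * c 1 - a 4 * c 2), {1,5,6,7}),
   ((a 1 * b 3 + a 1 * b 4 + a 2 * b 3 + a 2 * b 4), {2,3,4,7}),
   ((- a 1 * a 2 - a 1 * a 4 - a 2 * a 3 - a 3 * a 4 - c 1 * c 2 - c 1 * c 4 - c 2 * c 3 - c 3 * c 4), {2,3,5,7}),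
   ((- b 2 * c 1 - b 2 * c 4 - b 3 * c 1 - b 3 * c 4), {2,3,6,7}),
   ((- b 1 * c 2 - b 1 * c 3 - b 4 * c 2 - b 4 * c 3), {2,4,5,7}),
   ((a 1 * a 2 + a 1 * a 4 + a 2 * a 3 + a 3 * a 4 + c 1 * c 2 + c 1 * c 4 + c 2 * c 3 + c 3 * c 4), {2,4,6,7}),
   ((a 3 * b 1 + a 3 * b 2 + a 4 * b 1 + a 4 * b 2), {2,5,6,7})]"

definition HD1 :: "(nat \<Rightarrow> real) \<Rightarrow> (nat \<Rightarrow> real) \<Rightarrow> (nat \<Rightarrow> real) \<Rightarrow> (real \<times> nat set) list" where
  "HD1 a b c = [((- c 3 - c 4), {1,3,4}),
   ((- a 2 - a 3), {1,3,6}),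
   ((- a 1 - a 4), {1,4,5}),
   ((- c 1 - c 2), {1,5,6}),
   ((b 3 + b 4), {2,3,4}),
   ((- a 2 - a 4), {2,3,5}),
   ((a 1 + a 3), {2,4,6}),
   ((b 1 + b 2), {2,5,6}),
   ((c 2 + c 4), {3,5,7}),
   ((b 2 + b 3), {3,6,7}),
   ((b 1 + b 4), {4,5,7}),
   ((- c 1 - c 3), {4,6,7})]"

definition DHD1 :: "(nat \<Rightarrow> real) \<Rightarrow> (nat \<Rightarrow> real) \<Rightarrow> (nat \<Rightarrow> real) \<Rightarrow> (real \<times> nat set) list" where
  "DHD1 a b c = [((- b 1 * b 3 - b 1 * b 4 - b 2 * b 3 - b 2 * b 4 - c 1 * c 3 - c 1 * c 4 - c 2 * c 3 - c 2 * c 4), {1,2,3,4}),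
   ((a 2 * b 1 + a 2 * b 3 + a 4 * b 1 + a 4 * b 3), {1,2,3,5}),
   ((- a 2 * c 1 - a 2 * c 4 - a 3 * c 1 - a 3 * c 4), {1,2,3,6}),
   ((- a 1 * c 2 - a 1 * c 3 - a 4 * c 2 - a 4 * c 3), {1,2,4,5}),
   ((- a 1 * b 2 - a 1 * b 4 - a 3 * b 2 - a 3 * b 4), {1,2,4,6}),
   ((- b 1 * b 3 - b 1 * b 4 - b 2 * b 3 - b 2 * b 4 - c 1 * c 3 - c 1 * c 4 - c 2 * c 3 - c 2 * c 4), {1,2,5,6}),
   ((- a 1 * c 3 - a 1 * c 4 - a 2 * c 3 - a 2 * c 4), {1,3,4,7}),
   ((- b 1 * c 2 - b 1 * c 4 - b 3 * c 2 - b 3 * c 4), {1,3,5,7}),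
   ((- a 1 * a 2 - a 1 * a 3 - a 2 * a 4 - a 3 * a 4 - b 1 * b 2 - b 1 * b 3 - b 2 * b 4 - b 3 * b 4), {1,3,6,7}),
   ((- a 1 * a 2 - a 1 * a 3 - a 2 * a 4 - a 3 * a 4 - b 1 * b 2 - b 1 * b 3 - b 2 * b 4 - b 3 * b 4), {1,4,5,7}),
   ((b 2 * c 1 + b 2 * c 3 + b 4 * c 1 + b 4 * c 3), {1,4,6,7}),
   ((- a 3 * c 1 - a 3 * c 2 - a 4 * c 1 - a 4 * c 2), {1,5,6,7}),
   ((a 1 * b 3 + a 1 * b 4 + a 2 * b 3 + a 2 * b 4), {2,3,4,7}),
   ((- a 1 * a 2 - a 1 * a 4 - a 2 * a 3 - a 3 * a 4 - c 1 * c 2 - c 1 * c 4 - c 2 * c 3 - c 3 * c 4), {2,3,5,7}),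
   ((- b 2 * c 1 - b 2 * c 4 - b 3 * c 1 - b 3 * c 4), {2,3,6,7}),
   ((- b 1 * c 2 - b 1 * c 3 - b 4 * c 2 - b 4 * c 3), {2,4,5,7}),
   ((a 1 * a 2 + a 1 * a 4 + a 2 * a 3 + a 3 * a 4 + c 1 * c 2 + c 1 * c 4 + c 2 * c 3 + c 3 * c 4), {2,4,6,7}),
   ((a 3 * b 1 + a 3 * b 2 + a 4 * b 1 + a 4 * b 2), {2,5,6,7})]"

definition CD1 :: "(nat \<Rightarrow> real) \<Rightarrow> (nat \<Rightarrow> real) \<Rightarrow> (nat \<Rightarrow> real) \<Rightarrow> (real \<times> nat set) list" where
  "CD1 a b c = [((a 3 * b 1 + a 3 * b 2 + a 4 * b 1 + a 4 * b 2), {1,3,4}),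
   ((- a 1 * a 2 - a 1 * a 4 - a 2 * a 3 - a 3 * a 4 - c 1 * c 2 - c 1 * c 4 - c 2 * c 3 - c 3 * c 4), {1,3,5}),
   ((- b 1 * c 2 - b 1 * c 3 - b 4 * c 2 - b 4 * c 3), {1,3,6}),
   ((- b 2 * c 1 - b 2 * c 4 - b 3 * c 1 - b 3 * c 4), {1,4,5}),
   ((a 1 * a 2 + a 1 * a 4 + a 2 * a 3 + a 3 * a 4 + c 1 * c 2 + c 1 * c 4 + c 2 * c 3 + c 3 * c 4), {1,4,6}),
   ((a 1 * b 3 + a 1 * b 4 + a 2 * b 3 + a 2 * b 4), {1,5,6}),
   ((a 3 * c 1 + a 3 * c 2 + a 4 * c 1 + a 4 * c 2), {2,3,4}),
   ((b 2 * c 1 + b 2 * c 3 + b 4 * c 1 + b 4 * c 3), {2,3,5}),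
   ((a 1 * a 2 + a 1 * a 3 + a 2 * a 4 + a 3 * a 4 + b 1 * b 2 + b 1 * b 3 + b 2 * b 4 + b 3 * b 4), {2,3,6}),
   ((a 1 * a 2 + a 1 * a 3 + a 2 * a 4 + a 3 * a 4 + b 1 * b 2 + b 1 * b 3 + b 2 * b 4 + b 3 * b 4), {2,4,5}),
   ((- b 1 * c 2 - b 1 * c 4 - b 3 * c 2 - b 3 * c 4), {2,4,6}),
   ((a 1 * c 3 + a 1 * c 4 + a 2 * c 3 + a 2 * c 4), {2,5,6}),
   ((- b 1 * b 3 - b 1 * b 4 - b 2 * b 3 - b 2 * b 4 - c 1 * c 3 - c 1 * c 4 - c 2 * c 3 - c 2 * c 4), {3,4,7}),
   ((a 1 * b 2 + a 1 * b 4 + a 3 * b 2 + a 3 * b 4), {3,5,7}),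
   ((- a 1 * c 2 - a 1 * c 3 - a 4 * c 2 - a 4 * c 3), {3,6,7}),
   ((- a 2 * c 1 - a 2 * c 4 - a 3 * c 1 - a 3 * c 4), {4,5,7}),
   ((- a 2 * b 1 - a 2 * b 3 - a 4 * b 1 - a 4 * b 3), {4,6,7}),
   ((- b 1 * b 3 - b 1 * b 4 - b 2 * b 3 - b 2 * b 4 - c 1 * c 3 - c 1 * c 4 - c 2 * c 3 - c 2 * c 4), {5,6,7})]"

definition HD2 :: "(nat \<Rightarrow> real) \<Rightarrow> (nat \<Rightarrow> real) \<Rightarrow> (nat \<Rightarrow> real) \<Rightarrow> (real \<times> nat set) list" where
  "HD2 a b c = [((- a 1 - a 2 - a 3 - a 4), {1,2}),
   ((c 1 + c 2 + c 3 + c 4), {1,7}),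
   ((- b 1 - b 2 - b 3 - b 4), {2,7}),
   ((- a 3 - a 4), {3,4}),
   ((- b 2 - b 4), {3,5}),
   ((c 2 + c 3), {3,6}),
   ((c 1 + c 4), {4,5}),
   ((b 1 + b 3), {4,6}),
   ((- a 1 - a 2), {5,6})]"

definition DHD2 :: "(nat \<Rightarrow> real) \<Rightarrow> (nat \<Rightarrow> real) \<Rightarrow> (nat \<Rightarrow> real) \<Rightarrow> (real \<times> nat set) list" where
  "DHD2 a b c = [((a 3 * b 1 + a 3 * b 2 + a 4 * b 1 + a 4 * b 2), {1,3,4}),
   ((b 1 * b 2 + b 1 * b 4 + b 2 * b 3 + b 3 * b 4), {1,3,5}),
   ((- b 1 * c 2 - b 1 * c 3 - b 4 * c 2 - b 4 * c 3), {1,3,6}),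
   ((- b 2 * c 1 - b 2 * c 4 - b 3 * c 1 - b 3 * c 4), {1,4,5}),
   ((- b 1 * b 2 - b 1 * b 4 - b 2 * b 3 - b 3 * b 4), {1,4,6}),
   ((a 1 * b 3 + a 1 * b 4 + a 2 * b 3 + a 2 * b 4), {1,5,6}),
   ((a 3 * c 1 + a 3 * c 2 + a 4 * c 1 + a 4 * c 2), {2,3,4}),
   ((b 2 * c 1 + b 2 * c 3 + b 4 * c 1 + b 4 * c 3), {2,3,5}),
   ((- c 1 * c 2 - c 1 * c 3 - c 2 * c 4 - c 3 * c 4), {2,3,6}),
   ((- c 1 * c 2 - c 1 * c 3 - c 2 * c 4 - c 3 * c 4), {2,4,5}),
   ((- b 1 * c 2 - b 1 * c 4 - b 3 * c 2 - b 3 * c 4), {2,4,6}),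
   ((a 1 * c 3 + a 1 * c 4 + a 2 * c 3 + a 2 * c 4), {2,5,6}),
   ((a 1 * a 3 + a 1 * a 4 + a 2 * a 3 + a 2 * a 4), {3,4,7}),
   ((a 1 * b 2 + a 1 * b 4 + a 3 * b 2 + a 3 * b 4), {3,5,7}),
   ((- a 1 * c 2 - a 1 * c 3 - a 4 * c 2 - a 4 * c 3), {3,6,7}),
   ((- a 2 * c 1 - a 2 * c 4 - a 3 * c 1 - a 3 * c 4), {4,5,7}),
   ((- a 2 * b 1 - a 2 * b 3 - a 4 * b 1 - a 4 * b 3), {4,6,7}),
   ((a 1 * a 3 + a 1 * a 4 + a 2 * a 3 + a 2 * a 4), {5,6,7})]"

definition CD2 :: "(nat \<Rightarrow> real) \<Rightarrow> (nat \<Rightarrow> real) \<Rightarrow> (nat \<Rightarrow> real) \<Rightarrow> (real \<times> nat set) list" where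
  "CD2 a b c = [((- a 1 * a 3 - a 1 * a 4 - a 2 * a 3 - a 2 * a 4), {1,2,3,4}),
   ((- a 2 * b 1 - a 2 * b 3 - a 4 * b 1 - a 4 * b 3), {1,2,3,5}),
   ((a 2 * c 1 + a 2 * c 4 + a 3 * c 1 + a 3 * c 4), {1,2,3,6}),
   ((a 1 * c 2 + a 1 * c 3 + a 4 * c 2 + a 4 * c 3), {1,2,4,5}),
   ((a 1 * b 2 + a 1 * b 4 + a 3 * b 2 + a 3 * b 4), {1,2,4,6}),
   ((- a 1 * a 3 - a 1 * a 4 - a 2 * a 3 - a 2 * a 4), {1,2,5,6}),
   ((a 1 * c 3 + a 1 * c 4 + a 2 * c 3 + a 2 * c 4), {1,3,4,7}),
   ((b 1 * c 2 + b 1 * c 4 + b 3 * c 2 + b 3 * c 4), {1,3,5,7}),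
   ((- c 1 * c 2 - c 1 * c 3 - c 2 * c 4 - c 3 * c 4), {1,3,6,7}),
   ((- c 1 * c 2 - c 1 * c 3 - c 2 * c 4 - c 3 * c 4), {1,4,5,7}),
   ((- b 2 * c 1 - b 2 * c 3 - b 4 * c 1 - b 4 * c 3), {1,4,6,7}),
   ((a 3 * c 1 + a 3 * c 2 + a 4 * c 1 + a 4 * c 2), {1,5,6,7}),
   ((- a 1 * b 3 - a 1 * b 4 - a 2 * b 3 - a 2 * b 4), {2,3,4,7}),
   ((- b 1 * b 2 - b 1 * b 4 - b 2 * b 3 - b 3 * b 4), {2,3,5,7}),
   ((b 2 * c 1 + b 2 * c 4 + b 3 * c 1 + b 3 * c 4), {2,3,6,7}),
   ((b 1 * c 2 + b 1 * c 3 + b 4 * c 2 + b 4 * c 3), {2,4,5,7}),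
   ((b 1 * b 2 + b 1 * b 4 + b 2 * b 3 + b 3 * b 4), {2,4,6,7}),
   ((- a 3 * b 1 - a 3 * b 2 - a 4 * b 1 - a 4 * b 2), {2,5,6,7})]"


lemmas EV = dext_eval dl_def ev_def inversions_list fl_def bf_eval idx_expl gsum_def dd_def mv_def
  upt_conv_Cons insert_Diff_if hstar_def msgn_sum fadd_def fsub_def fscale_def

lemma phi_fl: "phi = fl (PHI a b c)"
  unfolding phi_def ef_bf
  apply (simp add: wedge_bf wedge_fscale_right wedge_fscale_left wedge_fadd_left wedge_fsub_left idx_expl)
  apply (rule form_eq)
    apply (simp add: fadd_def fsub_def fscale_def bf_out idx_expl)
   apply (rule fl_out, simp add: PHI_def idx_expl, assumption)
  apply (simp only: list.set ball_simps subseqs.simps Let_def list.map append.simps)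
  apply (intro conjI)
  apply (simp_all add: EV PHI_def)
  done

lemma psi_eq: "hstar (fl (PHI a b c)) = fl (PSI a b c)"
  apply (rule form_eq)
    apply (rule hstar_out, assumption)
   apply (rule fl_out, simp add: PSI_def idx_expl, assumption)
  apply (simp only: list.set ball_simps subseqs.simps Let_def list.map append.simps)
  apply (intro conjI)
  apply (simp_all add: EV PSI_def PHI_def)
  apply ((simp_all add: algebra_simps)?)
  done

lemma hpsi_eq: "hstar (fl (PSI a b c)) = fl (PHI a b c)"
  apply (rule form_eq)
    apply (rule hstar_out, assumption)
   apply (rule fl_out, simp add: PHI_def idx_expl, assumption)
  apply (simp only: list.set ball_simps subseqs.simps Let_def list.map append.simps)
  apply (intro conjI)
  apply (simp_all add: EV PHI_def PSI_def)
  apply ((simp_all add: algebra_simps)?)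
  done

lemma d1_eq: "dext (gbr (diagm a) (diagm b) (diagm c)) (fl (PHI a b c)) = fl (D1 a b c)"
  apply (rule form_eq)
    apply (rule dext_out, assumption)
   apply (rule fl_out, simp add: D1_def idx_expl, assumption)
  apply (simp only: list.set ball_simps subseqs.simps Let_def list.map append.simps)
  apply (intro conjI)
  apply (simp_all add: EV D1_def PHI_def)
  apply ((simp_all add: algebra_simps)?)
  done

lemma d2_eq: "dext (gbr (diagm a) (diagm b) (diagm c)) (fl (PSI a b c)) = fl (D2 a b c)"
  apply (rule form_eq)
    apply (rule dext_out, assumption)
   apply (rule fl_out, simp add: D2_def idx_expl, assumption)
  apply (simp only: list.set ball_simps subseqs.simps Let_def list.map append.simps)
  apply (intro conjI)
  apply (simp_all add: EV D2_def PSI_def)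
  apply ((simp_all add: algebra_simps)?)
  done

lemma c1_eq: "codiff (gbr (diagm a) (diagm b) (diagm c)) (fl (PHI a b c)) = fl (C1 a b c)"
  unfolding codiff_def psi_eq d2_eq
  apply (rule form_eq)
    apply (simp add: hstar_out)
   apply (rule fl_out, simp add: C1_def idx_expl, assumption)
  apply (simp only: list.set ball_simps subseqs.simps Let_def list.map append.simps)
  apply (intro conjI)
  apply (simp_all add: EV C1_def D2_def)
  apply ((simp_all add: algebra_simps)?)
  done

lemma c2_eq: "codiff (gbr (diagm a) (diagm b) (diagm c)) (fl (PSI a b c)) = fl (C2 a b c)"
  unfolding codiff_def hpsi_eq d1_eq
  apply (rule form_eq)
    apply (simp add: hstar_out)
   apply (rule fl_out, simp add: C2_def idx_expl, assumption)
  apply (simp only: list.set ball_simps subseqs.simps Let_def list.map append.simps)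
  apply (intro conjI)
  apply (simp_all add: EV C2_def D1_def)
  apply ((simp_all add: algebra_simps)?)
  done

lemma hd1_eq: "hstar (fl (D1 a b c)) = fl (HD1 a b c)"
  apply (rule form_eq)
    apply (rule hstar_out, assumption)
   apply (rule fl_out, simp add: HD1_def idx_expl, assumption)
  apply (simp only: list.set ball_simps subseqs.simps Let_def list.map append.simps)
  apply (intro conjI)
  apply (simp_all add: EV HD1_def D1_def)
  apply ((simp_all add: algebra_simps)?)
  done

lemma dhd1_eq: "dext (gbr (diagm a) (diagm b) (diagm c)) (fl (HD1 a b c)) = fl (DHD1 a b c)"
  apply (rule form_eq)
    apply (rule dext_out, assumption)
   apply (rule fl_out, simp add: DHD1_def idx_expl, assumption)
  apply (simp only: list.set ball_simps subseqs.simps Let_def list.map append.simps)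
  apply (intro conjI)
  apply (simp_all add: EV DHD1_def HD1_def)
  apply ((simp_all add: algebra_simps)?)
  done

lemma cd1_eq: "codiff (gbr (diagm a) (diagm b) (diagm c)) (fl (D1 a b c)) = fl (CD1 a b c)"
  unfolding codiff_def hd1_eq dhd1_eq
  apply (rule form_eq)
    apply (simp add: hstar_out)
   apply (rule fl_out, simp add: CD1_def idx_expl, assumption)
  apply (simp only: list.set ball_simps subseqs.simps Let_def list.map append.simps)
  apply (intro conjI)
  apply (simp_all add: EV CD1_def DHD1_def)
  apply ((simp_all add: algebra_simps)?)
  done

lemma hd2_eq: "hstar (fl (D2 a b c)) = fl (HD2 a b c)"
  apply (rule form_eq)
    apply (rule hstar_out, assumption)
   apply (rule fl_out, simp add: HD2_def idx_expl, assumption)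
  apply (simp only: list.set ball_simps subseqs.simps Let_def list.map append.simps)
  apply (intro conjI)
  apply (simp_all add: EV HD2_def D2_def)
  apply ((simp_all add: algebra_simps)?)
  done

lemma dhd2_eq: "dext (gbr (diagm a) (diagm b) (diagm c)) (fl (HD2 a b c)) = fl (DHD2 a b c)"
  apply (rule form_eq)
    apply (rule dext_out, assumption)
   apply (rule fl_out, simp add: DHD2_def idx_expl, assumption)
  apply (simp only: list.set ball_simps subseqs.simps Let_def list.map append.simps)
  apply (intro conjI)
  apply (simp_all add: EV DHD2_def HD2_def)
  apply ((simp_all add: algebra_simps)?)
  done

lemma cd2_eq: "codiff (gbr (diagm a) (diagm b) (diagm c)) (fl (D2 a b c)) = fl (CD2 a b c)"
  unfolding codiff_def hd2_eq dhd2_eq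
  apply (rule form_eq)
    apply (simp add: hstar_out)
   apply (rule fl_out, simp add: CD2_def idx_expl, assumption)
  apply (simp only: list.set ball_simps subseqs.simps Let_def list.map append.simps)
  apply (intro conjI)
  apply (simp_all add: EV CD2_def DHD2_def)
  apply ((simp_all add: algebra_simps)?)
  done

lemma dc1_eq: "dext (gbr (diagm a) (diagm b) (diagm c)) (fl (C1 a b c)) = fl (DC1 a b c)"
  apply (rule form_eq)
    apply (rule dext_out, assumption)
   apply (rule fl_out, simp add: DC1_def idx_expl, assumption)
  apply (simp only: list.set ball_simps subseqs.simps Let_def list.map append.simps)
  apply (intro conjI)
  apply (simp_all add: EV DC1_def C1_def)
  apply ((simp_all add: algebra_simps)?)
  done

lemma dc2_eq: "dext (gbr (diagm a) (diagm b) (diagm c)) (fl (C2 a b c)) = fl (DC2 a b c)"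
  apply (rule form_eq)
    apply (rule dext_out, assumption)
   apply (rule fl_out, simp add: DC2_def idx_expl, assumption)
  apply (simp only: list.set ball_simps subseqs.simps Let_def list.map append.simps)
  apply (intro conjI)
  apply (simp_all add: EV DC2_def C2_def)
  apply ((simp_all add: algebra_simps)?)
  done


theorem corollary4p11:
  fixes a b c :: "nat \<Rightarrow> real"
  assumes "a 1 + a 2 + a 3 + a 4 = 0"
      and "b 1 + b 2 + b 3 + b 4 = 0"
      and "c 1 + c 2 + c 3 + c 4 = 0"
  shows "(hodge_lap (gbr (diagm a) (diagm b) (diagm c)) phi =
           (((a 1 + a 2)^2 + (b 1 + b 2)^2 + (c 1 + c 2)^2) *\<^sub>f (omega7 \<and>\<^sub>f ef 7))
        +\<^sub>f (((a 1 + a 3)^2 + (b 1 + b 3)^2 + (c 1 + c 3)^2) *\<^sub>f (omega1 \<and>\<^sub>f ef 1))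
        +\<^sub>f (((a 1 + a 4)^2 + (b 1 + b 4)^2 + (c 1 + c 4)^2) *\<^sub>f (omega2 \<and>\<^sub>f ef 2))) \<and>
         (hodge_lap (gbr (diagm a) (diagm b) (diagm c)) (hstar phi) =
           (((a 1 + a 2)^2 + (b 1 + b 2)^2 + (c 1 + c 2)^2) *\<^sub>f (omega7 \<and>\<^sub>f ef 1 \<and>\<^sub>f ef 2))
        +\<^sub>f (((a 1 + a 3)^2 + (b 1 + b 3)^2 + (c 1 + c 3)^2) *\<^sub>f (omega1 \<and>\<^sub>f ef 2 \<and>\<^sub>f ef 7))
        -\<^sub>f (((a 1 + a 4)^2 + (b 1 + b 4)^2 + (c 1 + c 4)^2) *\<^sub>f (omega2 \<and>\<^sub>f ef 1 \<and>\<^sub>f ef 7)))"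
proof -
  have a4: "a 4 = - a 1 - a 2 - a 3" using assms(1) by linarith
  have b4: "b 4 = - b 1 - b 2 - b 3" using assms(2) by linarith
  have c4: "c 4 = - c 1 - c 2 - c 3" using assms(3) by linarith
  have L1: "hodge_lap (gbr (diagm a) (diagm b) (diagm c)) phi = fl (DC1 a b c) +\<^sub>f fl (CD1 a b c)"
    by (simp only: hodge_lap_def phi_fl[of a b c] c1_eq d1_eq dc1_eq cd1_eq)
  have L2: "hodge_lap (gbr (diagm a) (diagm b) (diagm c)) (hstar phi) = fl (DC2 a b c) +\<^sub>f fl (CD2 a b c)"
    by (simp only: hodge_lap_def phi_fl[of a b c] psi_eq c2_eq d2_eq dc2_eq cd2_eq)
  have R1: "fl (DC1 a b c) +\<^sub>f fl (CD1 a b c) =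
           (((a 1 + a 2)^2 + (b 1 + b 2)^2 + (c 1 + c 2)^2) *\<^sub>f (omega7 \<and>\<^sub>f ef 7))
        +\<^sub>f (((a 1 + a 3)^2 + (b 1 + b 3)^2 + (c 1 + c 3)^2) *\<^sub>f (omega1 \<and>\<^sub>f ef 1))
        +\<^sub>f (((a 1 + a 4)^2 + (b 1 + b 4)^2 + (c 1 + c 4)^2) *\<^sub>f (omega2 \<and>\<^sub>f ef 2))"
    unfolding omega7_def omega1_def omega2_def ef_bf
    apply (simp add: wedge_bf wedge_fscale_right wedge_fscale_left wedge_fadd_left wedge_fsub_left idx_expl)
    apply (rule form_eq)
      apply (simp add: fadd_def fl_out DC1_def CD1_def idx_expl)
     apply (simp add: fadd_def fsub_def fscale_def bf_out idx_expl)
    apply (simp only: list.set ball_simps subseqs.simps Let_def list.map append.simps)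
    apply (intro conjI)
    apply (simp_all add: EV DC1_def CD1_def)
    apply ((simp_all add: a4 b4 c4 power2_eq_square algebra_simps)?)
    done
  have R2: "fl (DC2 a b c) +\<^sub>f fl (CD2 a b c) =
           (((a 1 + a 2)^2 + (b 1 + b 2)^2 + (c 1 + c 2)^2) *\<^sub>f (omega7 \<and>\<^sub>f ef 1 \<and>\<^sub>f ef 2))
        +\<^sub>f (((a 1 + a 3)^2 + (b 1 + b 3)^2 + (c 1 + c 3)^2) *\<^sub>f (omega1 \<and>\<^sub>f ef 2 \<and>\<^sub>f ef 7))
        -\<^sub>f (((a 1 + a 4)^2 + (b 1 + b 4)^2 + (c 1 + c 4)^2) *\<^sub>f (omega2 \<and>\<^sub>f ef 1 \<and>\<^sub>f ef 7))"
    unfolding omega7_def omega1_def omega2_def ef_bf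
    apply (simp add: wedge_bf wedge_fscale_right wedge_fscale_left wedge_fadd_left wedge_fsub_left idx_expl)
    apply (rule form_eq)
      apply (simp add: fadd_def fl_out DC2_def CD2_def idx_expl)
     apply (simp add: fadd_def fsub_def fscale_def bf_out idx_expl)
    apply (simp only: list.set ball_simps subseqs.simps Let_def list.map append.simps)
    apply (intro conjI)
    apply (simp_all add: EV DC2_def CD2_def)
    apply ((simp_all add: a4 b4 c4 power2_eq_square algebra_simps)?)
    done
  show ?thesis using L1 L2 R1 R2 by simp
qed

end
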